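(* For every general channel $\mathbf W$, every sequence of cost functions $\mathbf c=\{c_n\}$ and every $K\in\mathbb R$ such that $\mathcal X_{n,c,K}\neq\emptyset$ for all $n$, and every real $R$, \[ C_p(R\mid\mathbf W,\mathbf c,K)=\inf_{\mathbf P\in\mathcal P_{c,K}}\lim_{\gamma\downarrow0}I_p(R-\gamma\mid\mathbf P,\mathbf W)=\inf_{\mathbf P\in\mathcal P_{c,K}}\sup_{\mathbf Q}\lim_{\gamma\downarrow0}J_p(R-\gamma\mid\mathbf P,\mathbf Q,\mathbf W), \] and for every $0\le\epsilon<1$, \[ C(\epsilon\mid\mathbf W,\mathbf c,K)=\sup_{\mathbf P\in\mathcal P_{c,K}}I(\epsilon\mid\mathbf P,\mathbf W)=\sup_{\mathbf P\in\mathcal P_{c,K}}\inf_{\mathbf Q}J(\epsilon\mid\mathbf P,\mathbf Q,\mathbf W). \]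
   Context: A general channel $\mathbf W=\{W^n\}$: finite (or countable) sets $\mathcal X_n,\mathcal Y_n$, distributions $W^n_x$ on $\mathcal Y_n$. $c_n:\mathcal X_n\to\mathbb R$; $\mathcal X_{n,c,K}=\{x\in\mathcal X_n:c_n(x)\le nK\}$. $\mathcal P_{c,K}$ is the set of sequences $\mathbf P=\{P^n\}$ of distributions on $\mathcal X_n$ with $\mathrm{supp}(P^n)\subset\mathcal X_{n,c,K}$ for all $n$; $\mathbf Q=\{Q^n\}$ ranges over sequences of distributions on $\mathcal Y_n$; $W^n_{P^n}=\sum_xP^n(x)W^n_x$; logs natural. $I_p(R|\mathbf P,\mathbf W)=\limsup_n\sum_xP^n(x)W^n_x\{\frac1n\log\frac{W^n_x(y)}{W^n_{P^n}(y)}<R\}$, $I(\epsilon|\mathbf P,\mathbf W)=\sup\{R:I_p(R|\mathbf P,\mathbf W)\le\epsilon\}$; $J_p,J$ are the same with $W^n_{P^n}$ replaced by $Q^n$. A code $\Phi=(N,\phi,\{\mathcal D_i\})$ for $W^n$ has $\phi:\{1..N\}\to\mathcal X_n$, disjoint decoding sets $\mathcal D_i\subset\mathcal Y_n$, $|\Phi|=N$, $\mathrm{supp}(\Phi)=\{\phi(1),\dots,\phi(N)\}$, $P_{e,W^n}(\Phi)=\frac1N\sum_i(1-W^n_{\phi(i)}(\mathcal D_i))$. Over code sequences with $\mathrm{supp}(\Phi_n)\subset\mathcal X_{n,c,K}$: $C_p(R|\mathbf W,\mathbf c,K)=\inf\{\limsup_nP_{e,W^n}(\Phi_n):\liminf_n\frac1n\log|\Phi_n|\ge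 R\}$, $C(\epsilon|\mathbf W,\mathbf c,K)=\sup\{\liminf_n\frac1n\log|\Phi_n|:\limsup_nP_{e,W^n}(\Phi_n)\le\epsilon\}$. *)

theory Defs
  imports "HOL-Probability.Probability"
begin

text \<open>General channel: W n x is the output distribution W^n_x of the n-th channel
  on input x; X n is the (countable) input alphabet of the n-th channel; outputs live in
  the type 'y. Logarithms are natural (ln).\<close>

definition Xck :: "(nat \<Rightarrow> 'x set) \<Rightarrow> (nat \<Rightarrow> 'x \<Rightarrow> real) \<Rightarrow> real \<Rightarrow> nat \<Rightarrow> 'x set" where
  "Xck X c K n = {x \<in> X n. c n x \<le> real n * K}"

definition Pck :: "(nat \<Rightarrow> 'x set) \<Rightarrow> (nat \<Rightarrow> 'x \<Rightarrow> real) \<Rightarrow> real \<Rightarrow> (nat \<Rightarrow> 'x pmf) set" where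
  "Pck X c K = {P. \<forall>n. set_pmf (P n) \<subseteq> Xck X c K n}"

definition outdist :: "(nat \<Rightarrow> 'x \<Rightarrow> 'y pmf) \<Rightarrow> (nat \<Rightarrow> 'x pmf) \<Rightarrow> nat \<Rightarrow> 'y pmf" where
  "outdist W P n = bind_pmf (P n) (W n)"

definition joint :: "(nat \<Rightarrow> 'x \<Rightarrow> 'y pmf) \<Rightarrow> (nat \<Rightarrow> 'x pmf) \<Rightarrow> nat \<Rightarrow> ('x \<times> 'y) pmf" where
  "joint W P n = bind_pmf (P n) (\<lambda>x. map_pmf (\<lambda>y. (x, y)) (W n x))"

text \<open>sum_x P^n(x) W^n_x{ (1/n) log (W^n_x(y)/Q^n(y)) < R }.  When Q^n(y) = 0 (and
  W^n_x(y) > 0) the log-ratio is +infinity, so such y never belong to the event.\<close>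
definition dens_prob :: "(nat \<Rightarrow> 'x \<Rightarrow> 'y pmf) \<Rightarrow> (nat \<Rightarrow> 'x pmf) \<Rightarrow> (nat \<Rightarrow> 'y pmf) \<Rightarrow> real \<Rightarrow> nat \<Rightarrow> real" where
  "dens_prob W P Q R n = measure_pmf.prob (joint W P n)
     {(x, y). 0 < pmf (Q n) y \<and> (1 / real n) * ln (pmf (W n x) y / pmf (Q n) y) < R}"

definition Jp :: "real \<Rightarrow> (nat \<Rightarrow> 'x pmf) \<Rightarrow> (nat \<Rightarrow> 'y pmf) \<Rightarrow> (nat \<Rightarrow> 'x \<Rightarrow> 'y pmf) \<Rightarrow> ereal" where
  "Jp R P Q W = limsup (\<lambda>n. ereal (dens_prob W P Q R n))"

definition Ip :: "real \<Rightarrow> (nat \<Rightarrow> 'x pmf) \<Rightarrow> (nat \<Rightarrow> 'x \<Rightarrow> 'y pmf) \<Rightarrow> ereal" where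
  "Ip R P W = limsup (\<lambda>n. ereal (dens_prob W P (outdist W P) R n))"

definition Jeps :: "real \<Rightarrow> (nat \<Rightarrow> 'x pmf) \<Rightarrow> (nat \<Rightarrow> 'y pmf) \<Rightarrow> (nat \<Rightarrow> 'x \<Rightarrow> 'y pmf) \<Rightarrow> ereal" where
  "Jeps eps P Q W = Sup {ereal R | R. Jp R P Q W \<le> ereal eps}"

definition Ieps :: "real \<Rightarrow> (nat \<Rightarrow> 'x pmf) \<Rightarrow> (nat \<Rightarrow> 'x \<Rightarrow> 'y pmf) \<Rightarrow> ereal" where
  "Ieps eps P W = Sup {ereal R | R. Ip R P W \<le> ereal eps}"

text \<open>A code (N, phi, D) for W^n with messages 1..N, codewords in X_{n,c,K}
  and pairwise disjoint decoding sets.\<close>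
type_synonym ('x, 'y) code = "nat \<times> (nat \<Rightarrow> 'x) \<times> (nat \<Rightarrow> 'y set)"

definition is_code :: "(nat \<Rightarrow> 'x set) \<Rightarrow> (nat \<Rightarrow> 'x \<Rightarrow> real) \<Rightarrow> real \<Rightarrow> nat \<Rightarrow> ('x, 'y) code \<Rightarrow> bool" where
  "is_code X c K n \<Phi> = (case \<Phi> of (N, \<phi>, D) \<Rightarrow>
      1 \<le> N \<and> (\<forall>i\<in>{1..N}. \<phi> i \<in> Xck X c K n) \<and>
      (\<forall>i\<in>{1..N}. \<forall>j\<in>{1..N}. i \<noteq> j \<longrightarrow> D i \<inter> D j = {}))"

definition code_size :: "('x, 'y) code \<Rightarrow> nat" where
  "code_size \<Phi> = fst \<Phi>"

definition err_prob :: "('x \<Rightarrow> 'y pmf) \<Rightarrow> ('x, 'y) code \<Rightarrow> real" where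
  "err_prob Wn \<Phi> = (case \<Phi> of (N, \<phi>, D) \<Rightarrow>
      (1 / real N) * (\<Sum>i = 1..N. 1 - measure_pmf.prob (Wn (\<phi> i)) (D i)))"

definition code_seqs :: "(nat \<Rightarrow> 'x set) \<Rightarrow> (nat \<Rightarrow> 'x \<Rightarrow> real) \<Rightarrow> real \<Rightarrow> (nat \<Rightarrow> ('x, 'y) code) set" where
  "code_seqs X c K = {\<Phi>. \<forall>n. is_code X c K n (\<Phi> n)}"

definition rate_liminf :: "(nat \<Rightarrow> ('x, 'y) code) \<Rightarrow> ereal" where
  "rate_liminf \<Phi> = liminf (\<lambda>n. ereal ((1 / real n) * ln (real (code_size (\<Phi> n)))))"

definition err_limsup :: "(nat \<Rightarrow> 'x \<Rightarrow> 'y pmf) \<Rightarrow> (nat \<Rightarrow> ('x, 'y) code) \<Rightarrow> ereal" where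
  "err_limsup W \<Phi> = limsup (\<lambda>n. ereal (err_prob (W n) (\<Phi> n)))"

definition Cp :: "real \<Rightarrow> (nat \<Rightarrow> 'x \<Rightarrow> 'y pmf) \<Rightarrow> (nat \<Rightarrow> 'x set) \<Rightarrow> (nat \<Rightarrow> 'x \<Rightarrow> real) \<Rightarrow> real \<Rightarrow> ereal" where
  "Cp R W X c K = Inf {err_limsup W \<Phi> | \<Phi>. \<Phi> \<in> code_seqs X c K \<and> rate_liminf \<Phi> \<ge> ereal R}"

definition Ceps :: "real \<Rightarrow> (nat \<Rightarrow> 'x \<Rightarrow> 'y pmf) \<Rightarrow> (nat \<Rightarrow> 'x set) \<Rightarrow> (nat \<Rightarrow> 'x \<Rightarrow> real) \<Rightarrow> real \<Rightarrow> ereal" where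
  "Ceps eps W X c K = Sup {rate_liminf \<Phi> | \<Phi>. \<Phi> \<in> code_seqs X c K \<and> err_limsup W \<Phi> \<le> ereal eps}"

end

theory Submission
  imports Defs
begin


lemma prob_bind_pmf:
  "measure_pmf.prob (bind_pmf p N) A = (\<integral>x. measure_pmf.prob (N x) A \<partial>measure_pmf p)"
proof -
  have int: "integrable (measure_pmf p) (\<lambda>x. measure_pmf.prob (N x) A)"
    by (intro measure_pmf.integrable_const_bound[where B=1]) auto
  have "ennreal (measure_pmf.prob (bind_pmf p N) A) = emeasure (bind_pmf p N) A"
    by (simp only: measure_pmf.emeasure_eq_measure)
  also have "\<dots> = (\<integral>\<^sup>+x. emeasure (N x) A \<partial>measure_pmf p)"
    by (rule emeasure_bind_pmf)
  also have "\<dots> = (\<integral>\<^sup>+x. ennreal (measure_pmf.prob (N x) A) \<partial>measure_pmf p)"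
    by (simp only: measure_pmf.emeasure_eq_measure)
  also have "\<dots> = ennreal (\<integral>x. measure_pmf.prob (N x) A \<partial>measure_pmf p)"
    by (rule nn_integral_eq_integral[OF int]) auto
  finally show ?thesis
    by (simp add: ennreal_inj integral_nonneg_AE)
qed

lemma prob_dens_le:
  assumes c: "c \<ge> 0" and le: "\<And>y. y \<in> A \<Longrightarrow> pmf q y \<le> c * pmf r y"
  shows "measure_pmf.prob q A \<le> c * measure_pmf.prob r A"
proof -
  have "emeasure (measure_pmf q) A = (\<integral>\<^sup>+ y. ennreal (pmf q y) * indicator A y \<partial>count_space UNIV)"
    by (simp add: nn_integral_measure_pmf[symmetric])
  also have "\<dots> \<le> (\<integral>\<^sup>+ y. ennreal c * (ennreal (pmf r y) * indicator A y) \<partial>count_space UNIV)"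
    by (intro nn_integral_mono) (auto simp: indicator_def le c ennreal_mult[symmetric] intro!: ennreal_leI)
  also have "\<dots> = ennreal c * emeasure (measure_pmf r) A"
    by (simp add: nn_integral_cmult nn_integral_measure_pmf[symmetric])
  finally have "ennreal (measure_pmf.prob q A) \<le> ennreal (c * measure_pmf.prob r A)"
    by (simp add: measure_pmf.emeasure_eq_measure ennreal_mult c)
  then show ?thesis using c by (simp add: ennreal_le_iff)
qed



lemma int_prob: "integrable (measure_pmf p) (\<lambda>x. measure_pmf.prob (N x) (A x))"
  by (intro measure_pmf.integrable_const_bound[where B=1]) auto

lemma prob_joint:
  "measure_pmf.prob (bind_pmf p (\<lambda>x. map_pmf (Pair x) (V x))) A
   = (\<integral>x. measure_pmf.prob (V x) {y. (x,y) \<in> A} \<partial>measure_pmf p)"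
  by (simp add: prob_bind_pmf vimage_def)

lemma feinstein:
  fixes V :: "'x \<Rightarrow> 'y pmf" and p :: "'x pmf" and \<beta> :: real and M :: nat
  assumes bpos: "\<beta> > 0"
  defines "q \<equiv> bind_pmf p V" and "j \<equiv> bind_pmf p (\<lambda>x. map_pmf (Pair x) (V x))"
  defines "\<epsilon> \<equiv> measure_pmf.prob j {(x,y). pmf (V x) y \<le> \<beta> * pmf q y} + M/\<beta>"
  shows "\<exists>\<phi> E. (\<forall>i\<in>{1..M}. \<phi> i \<in> set_pmf p) \<and> (\<forall>i\<in>{1..M}. \<forall>k\<in>{1..M}. i\<noteq>k \<longrightarrow> E i \<inter> E k = {})
     \<and> (\<forall>i\<in>{1..M}. measure_pmf.prob (V (\<phi> i)) (E i) \<ge> 1 - \<epsilon>)"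
proof -
  define D where "D x = {y. \<beta> * pmf q y < pmf (V x) y}" for x
  have compl: "measure_pmf.prob j {(x,y). pmf (V x) y \<le> \<beta> * pmf q y} = 1 - measure_pmf.prob j {(x,y). y \<in> D x}"
  proof -
    have "{(x,y). pmf (V x) y \<le> \<beta> * pmf q y} = UNIV - {(x,y). y \<in> D x}"
      by (auto simp: D_def not_less)
    then show ?thesis using measure_pmf.prob_compl[of "{(x,y). y \<in> D x}" j] by simp
  qed
  have main: "\<forall>m\<le>M. \<exists>\<phi> E. (\<forall>i\<in>{1..m}. \<phi> i \<in> set_pmf p \<and> E i \<subseteq> D (\<phi> i) \<and> measure_pmf.prob (V (\<phi> i)) (E i) \<ge> 1 - \<epsilon>)
       \<and> (\<forall>i\<in>{1..m}. \<forall>k\<in>{1..m}. i\<noteq>k \<longrightarrow> E i \<inter> E k = {})"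
  proof (intro allI impI)
    fix m assume "m \<le> M"
    then show "\<exists>\<phi> E. (\<forall>i\<in>{1..m}. \<phi> i \<in> set_pmf p \<and> E i \<subseteq> D (\<phi> i) \<and> measure_pmf.prob (V (\<phi> i)) (E i) \<ge> 1 - \<epsilon>)
       \<and> (\<forall>i\<in>{1..m}. \<forall>k\<in>{1..m}. i\<noteq>k \<longrightarrow> E i \<inter> E k = {})"
    proof (induction m)
      case 0
      then show ?case by auto
    next
      case (Suc m)
      then obtain \<phi> E where ph: "\<forall>i\<in>{1..m}. \<phi> i \<in> set_pmf p \<and> E i \<subseteq> D (\<phi> i) \<and> measure_pmf.prob (V (\<phi> i)) (E i) \<ge> 1 - \<epsilon>"
        and dj: "\<forall>i\<in>{1..m}. \<forall>k\<in>{1..m}. i\<noteq>k \<longrightarrow> E i \<inter> E k = {}" by auto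
      define U where "U = (\<Union>i\<in>{1..m}. E i)"
      have qU: "measure_pmf.prob q U \<le> m / \<beta>"
      proof -
        have "measure_pmf.prob q U \<le> (\<Sum>i\<in>{1..m}. measure_pmf.prob q (E i))"
          unfolding U_def by (rule measure_pmf.finite_measure_subadditive_finite) auto
        also have "\<dots> \<le> (\<Sum>i\<in>{1..m}. 1 / \<beta>)"
        proof (rule sum_mono)
          fix i assume i: "i \<in> {1..m}"
          have "measure_pmf.prob q (E i) \<le> (1/\<beta>) * measure_pmf.prob (V (\<phi> i)) (E i)"
          proof (rule prob_dens_le)
            show "0 \<le> 1/\<beta>" using bpos by simp
            fix y assume "y \<in> E i"
            then have "y \<in> D (\<phi> i)" using ph i by auto
            then show "pmf q y \<le> 1 / \<beta> * pmf (V (\<phi> i)) y"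
              using bpos by (simp add: D_def field_simps)
          qed
          also have "\<dots> \<le> 1/\<beta>" using bpos
            by (simp add: divide_right_mono)
          finally show "measure_pmf.prob q (E i) \<le> 1/\<beta>" .
        qed
        finally show ?thesis by simp
      qed
      have "\<exists>x\<in>set_pmf p. measure_pmf.prob (V x) (D x - U) \<ge> 1 - \<epsilon>"
      proof (rule ccontr)
        assume "\<not> ?thesis"
        then have lt: "\<And>x. x \<in> set_pmf p \<Longrightarrow> measure_pmf.prob (V x) (D x - U) \<le> 1 - \<epsilon>" by auto
        have "measure_pmf.prob j {(x,y). y \<in> D x} = (\<integral>x. measure_pmf.prob (V x) (D x) \<partial>measure_pmf p)"
          unfolding j_def by (simp add: prob_joint)
        also have "\<dots> \<le> (\<integral>x. (1 - \<epsilon>) + measure_pmf.prob (V x) U \<partial>measure_pmf p)"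
        proof (rule integral_mono_AE)
          show "integrable (measure_pmf p) (\<lambda>x. measure_pmf.prob (V x) (D x))" by (rule int_prob)
          show "integrable (measure_pmf p) (\<lambda>x. (1 - \<epsilon>) + measure_pmf.prob (V x) U)"
            using int_prob[of p V "\<lambda>_. U"] by simp
          show "AE x in measure_pmf p. measure_pmf.prob (V x) (D x) \<le> 1 - \<epsilon> + measure_pmf.prob (V x) U"
          proof (rule AE_pmfI)
            fix x assume x: "x \<in> set_pmf p"
            have "measure_pmf.prob (V x) (D x) \<le> measure_pmf.prob (V x) ((D x - U) \<union> U)"
              by (rule measure_pmf.finite_measure_mono) auto
            also have "\<dots> \<le> measure_pmf.prob (V x) (D x - U) + measure_pmf.prob (V x) U"
              by (rule measure_subadditive) auto
            finally show "measure_pmf.prob (V x) (D x) \<le> 1 - \<epsilon> + measure_pmf.prob (V x) U"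
              using lt[OF x] by simp
          qed
        qed
        also have "\<dots> = (1 - \<epsilon>) + measure_pmf.prob q U"
          using int_prob[of p V "\<lambda>_. U"] by (simp add: q_def prob_bind_pmf)
        finally have "measure_pmf.prob j {(x,y). y \<in> D x} \<le> (1 - \<epsilon>) + m / \<beta>" using qU by simp
        then have "M / \<beta> \<le> m / \<beta>" unfolding \<epsilon>_def compl by simp
        then have "real M \<le> m" using bpos by (simp add: divide_right_mono_neg divide_le_cancel)
        then show False using Suc.prems by simp
      qed
      then obtain x where x: "x \<in> set_pmf p" "measure_pmf.prob (V x) (D x - U) \<ge> 1 - \<epsilon>" by auto
      show ?case
      proof (intro exI conjI)
        show "\<forall>i\<in>{1..Suc m}. (\<phi>(Suc m := x)) i \<in> set_pmf p \<and> (E(Suc m := D x - U)) i \<subseteq> D ((\<phi>(Suc m := x)) i)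
              \<and> 1 - \<epsilon> \<le> measure_pmf.prob (V ((\<phi>(Suc m := x)) i)) ((E(Suc m := D x - U)) i)"
          using ph x by (auto simp: le_Suc_eq)
        show "\<forall>i\<in>{1..Suc m}. \<forall>k\<in>{1..Suc m}. i \<noteq> k \<longrightarrow> (E(Suc m := D x - U)) i \<inter> (E(Suc m := D x - U)) k = {}"
        proof (intro ballI impI)
          fix i k assume i: "i \<in> {1..Suc m}" and k: "k \<in> {1..Suc m}" and ik: "i \<noteq> k"
          show "(E(Suc m := D x - U)) i \<inter> (E(Suc m := D x - U)) k = {}"
          proof (cases "i = Suc m")
            case True
            then have "k \<in> {1..m}" using k ik by auto
            then have "E k \<subseteq> U" unfolding U_def by auto
            then show ?thesis using True ik by auto
          next
            case False
            then have i': "i \<in> {1..m}" using i by auto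
            show ?thesis
            proof (cases "k = Suc m")
              case True
              have "E i \<subseteq> U" using i' unfolding U_def by auto
              then show ?thesis using True ik by auto
            next
              case False
              then have "k \<in> {1..m}" using k by auto
              then show ?thesis using dj i' ik \<open>i \<noteq> Suc m\<close> False by auto
            qed
          qed
        qed
      qed
    qed
  qed
  from main[rule_format, of M] obtain \<phi> E where
    "\<forall>i\<in>{1..M}. \<phi> i \<in> set_pmf p \<and> E i \<subseteq> D (\<phi> i) \<and> measure_pmf.prob (V (\<phi> i)) (E i) \<ge> 1 - \<epsilon>"
    "\<forall>i\<in>{1..M}. \<forall>k\<in>{1..M}. i\<noteq>k \<longrightarrow> E i \<inter> E k = {}" by auto
  then show ?thesis by blast
qed



lemma converse1:
  fixes V :: "'x \<Rightarrow> 'y pmf" and \<phi> :: "nat \<Rightarrow> 'x" and D :: "nat \<Rightarrow> 'y set" and M :: nat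
  assumes M: "M \<ge> 1" and disj: "\<forall>i\<in>{1..M}. \<forall>k\<in>{1..M}. i\<noteq>k \<longrightarrow> D i \<inter> D k = {}" and a: "\<alpha> \<ge> 0"
  defines "p \<equiv> map_pmf \<phi> (pmf_of_set {1..M})"
  defines "q \<equiv> bind_pmf p V" and "j \<equiv> bind_pmf p (\<lambda>x. map_pmf (Pair x) (V x))"
  shows "measure_pmf.prob j {(x,y). pmf (V x) y \<le> \<alpha> * pmf q y}
      \<le> (1 / real M) * (\<Sum>i = 1..M. 1 - measure_pmf.prob (V (\<phi> i)) (D i)) + \<alpha> / M"
proof -
  define B where "B = {(x,y). pmf (V x) y \<le> \<alpha> * pmf q y}"
  have ne: "{1..M} \<noteq> {}" using M by auto
  have "measure_pmf.prob j B = (\<integral>x. measure_pmf.prob (V x) {y. (x,y) \<in> B} \<partial>measure_pmf p)"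
    unfolding j_def by (rule prob_joint)
  also have "\<dots> = (\<Sum>i = 1..M. measure_pmf.prob (V (\<phi> i)) {y. (\<phi> i,y) \<in> B}) / M"
    unfolding p_def using ne by (simp add: integral_pmf_of_set)
  also have "\<dots> \<le> (\<Sum>i = 1..M. (1 - measure_pmf.prob (V (\<phi> i)) (D i)) + \<alpha> * measure_pmf.prob q (D i)) / M"
  proof (intro divide_right_mono sum_mono)
    fix i assume i: "i \<in> {1..M}"
    let ?B = "{y. (\<phi> i,y) \<in> B}"
    have "measure_pmf.prob (V (\<phi> i)) ?B \<le> measure_pmf.prob (V (\<phi> i)) ((?B \<inter> D i) \<union> (UNIV - D i))"
      by (rule measure_pmf.finite_measure_mono) auto
    also have "\<dots> \<le> measure_pmf.prob (V (\<phi> i)) (?B \<inter> D i) + measure_pmf.prob (V (\<phi> i)) (UNIV - D i)"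
      by (rule measure_subadditive) auto
    also have "measure_pmf.prob (V (\<phi> i)) (UNIV - D i) = 1 - measure_pmf.prob (V (\<phi> i)) (D i)"
      using measure_pmf.prob_compl[of "D i" "V (\<phi> i)"] by simp
    also have "measure_pmf.prob (V (\<phi> i)) (?B \<inter> D i) \<le> \<alpha> * measure_pmf.prob q (?B \<inter> D i)"
      by (rule prob_dens_le[OF a]) (auto simp: B_def)
    also have "\<dots> \<le> \<alpha> * measure_pmf.prob q (D i)"
      using a by (intro mult_left_mono measure_pmf.finite_measure_mono) auto
    finally show "measure_pmf.prob (V (\<phi> i)) ?B \<le> (1 - measure_pmf.prob (V (\<phi> i)) (D i)) + \<alpha> * measure_pmf.prob q (D i)"
      by simp
  qed simp
  also have "\<dots> = (\<Sum>i = 1..M. 1 - measure_pmf.prob (V (\<phi> i)) (D i)) / M + \<alpha> * (\<Sum>i = 1..M. measure_pmf.prob q (D i)) / M"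
    by (simp add: sum.distrib sum_distrib_left add_divide_distrib)
  also have "(\<Sum>i = 1..M. measure_pmf.prob q (D i)) = measure_pmf.prob q (\<Union>i\<in>{1..M}. D i)"
    by (rule measure_pmf.finite_measure_finite_Union[symmetric]) (use disj in \<open>auto simp: disjoint_family_on_def\<close>)
  also have "\<alpha> * \<dots> / M \<le> \<alpha> * 1 / M"
    using a by (intro divide_right_mono mult_left_mono) auto
  finally show ?thesis unfolding B_def by simp
qed

lemma qlemma:
  fixes V :: "'x \<Rightarrow> 'y pmf" and p :: "'x pmf" and Q :: "'y pmf"
  assumes a: "\<alpha> > 0" and t: "t > 0"
  defines "q \<equiv> bind_pmf p V" and "j \<equiv> bind_pmf p (\<lambda>x. map_pmf (Pair x) (V x))"
  shows "measure_pmf.prob j {(x,y). 0 < pmf Q y \<and> pmf (V x) y < \<alpha> * pmf Q y}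
     \<le> measure_pmf.prob j {(x,y). pmf (V x) y < \<alpha> * t * pmf q y} + 1 / t"
proof -
  define C where "C = {y. t * pmf q y < pmf Q y}"
  have "measure_pmf.prob j {(x,y). 0 < pmf Q y \<and> pmf (V x) y < \<alpha> * pmf Q y}
     \<le> measure_pmf.prob j ({(x,y). pmf (V x) y < \<alpha> * t * pmf q y} \<union> UNIV \<times> C)"
  proof (rule measure_pmf.finite_measure_mono)
    show "{(x,y). 0 < pmf Q y \<and> pmf (V x) y < \<alpha> * pmf Q y} \<subseteq> {(x,y). pmf (V x) y < \<alpha> * t * pmf q y} \<union> UNIV \<times> C"
    proof
      fix z assume "z \<in> {(x,y). 0 < pmf Q y \<and> pmf (V x) y < \<alpha> * pmf Q y}"
      then obtain x y where z: "z = (x,y)" and h: "0 < pmf Q y" "pmf (V x) y < \<alpha> * pmf Q y" by auto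
      show "z \<in> {(x,y). pmf (V x) y < \<alpha> * t * pmf q y} \<union> UNIV \<times> C"
      proof (cases "y \<in> C")
        case False
        then have "pmf Q y \<le> t * pmf q y" by (simp add: C_def not_less)
        then have "\<alpha> * pmf Q y \<le> \<alpha> * (t * pmf q y)" using a by simp
        then have "pmf (V x) y < \<alpha> * t * pmf q y" using h by (simp add: mult.assoc)
        then show ?thesis using z by simp
      qed (use z in simp)
    qed
  qed simp
  also have "\<dots> \<le> measure_pmf.prob j {(x,y). pmf (V x) y < \<alpha> * t * pmf q y} + measure_pmf.prob j (UNIV \<times> C)"
    by (rule measure_subadditive) auto
  also have "measure_pmf.prob j (UNIV \<times> C) = measure_pmf.prob q C"
    unfolding j_def q_def by (simp add: prob_joint prob_bind_pmf)
  also have "\<dots> \<le> (1/t) * measure_pmf.prob Q C"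
    by (rule prob_dens_le) (use t in \<open>auto simp: C_def field_simps\<close>)
  also have "\<dots> \<le> 1 / t" using t by (simp add: divide_right_mono)
  finally show ?thesis by simp
qed



lemma joint_supp:
  assumes "(x,y) \<in> set_pmf (joint W P n)"
  shows "x \<in> set_pmf (P n)" "0 < pmf (W n x) y" "0 < pmf (outdist W P n) y"
proof -
  from assms have x: "x \<in> set_pmf (P n)" and y: "y \<in> set_pmf (W n x)"
    by (auto simp: joint_def)
  then show "x \<in> set_pmf (P n)" "0 < pmf (W n x) y"
    by (auto simp: set_pmf_iff pmf_nonneg order_le_neq_trans)
  have "y \<in> set_pmf (outdist W P n)" using x y by (auto simp: outdist_def)
  then show "0 < pmf (outdist W P n) y"
    by (auto simp: set_pmf_iff pmf_nonneg order_le_neq_trans)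
qed

lemma prob_supp_mono:
  assumes "\<And>z. z \<in> set_pmf p \<Longrightarrow> z \<in> A \<Longrightarrow> z \<in> B"
  shows "measure_pmf.prob p A \<le> measure_pmf.prob p B"
proof -
  have "measure_pmf.prob p A = measure_pmf.prob p (A \<inter> set_pmf p)"
    by (simp add: measure_Int_set_pmf)
  also have "\<dots> \<le> measure_pmf.prob p B"
    using assms by (intro measure_pmf.finite_measure_mono) auto
  finally show ?thesis .
qed

lemma prob_supp_eq:
  assumes "\<And>z. z \<in> set_pmf p \<Longrightarrow> z \<in> A \<longleftrightarrow> z \<in> B"
  shows "measure_pmf.prob p A = measure_pmf.prob p B"
  using prob_supp_mono[of p A B] prob_supp_mono[of p B A] assms by auto

lemma ln_ratio_less:
  assumes n: "n > 0" and v: "v > 0" and w: "w > 0"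
  shows "(1 / real n) * ln (v / w) < R \<longleftrightarrow> v < exp (real n * R) * w"
proof -
  have "(1 / real n) * ln (v / w) < R \<longleftrightarrow> ln (v / w) < real n * R"
    using n by (simp add: field_simps)
  also have "\<dots> \<longleftrightarrow> v / w < exp (real n * R)"
    using v w by (metis divide_pos_pos exp_less_cancel_iff exp_ln)
  also have "\<dots> \<longleftrightarrow> v < exp (real n * R) * w"
    using w by (simp add: divide_less_eq)
  finally show ?thesis .
qed

lemma dens_conv:
  assumes n: "n > 0"
  shows "dens_prob W P Q R n = measure_pmf.prob (joint W P n)
     {(x, y). 0 < pmf (Q n) y \<and> pmf (W n x) y < exp (real n * R) * pmf (Q n) y}"
  unfolding dens_prob_def
proof (rule prob_supp_eq)
  fix z assume z: "z \<in> set_pmf (joint W P n)"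
  obtain x y where zz: "z = (x,y)" by fastforce
  have v: "0 < pmf (W n x) y" using joint_supp[of x y W P n] z zz by auto
  show "z \<in> {(x, y). 0 < pmf (Q n) y \<and> 1 / real n * ln (pmf (W n x) y / pmf (Q n) y) < R} \<longleftrightarrow>
        z \<in> {(x, y). 0 < pmf (Q n) y \<and> pmf (W n x) y < exp (real n * R) * pmf (Q n) y}"
    using ln_ratio_less[OF n v] zz by auto
qed

lemma dens_out:
  assumes n: "n > 0"
  shows "dens_prob W P (outdist W P) R n = measure_pmf.prob (joint W P n)
     {(x, y). pmf (W n x) y < exp (real n * R) * pmf (outdist W P n) y}"
  unfolding dens_conv[OF n]
proof (rule prob_supp_eq)
  fix z assume z: "z \<in> set_pmf (joint W P n)"
  obtain x y where zz: "z = (x,y)" by fastforce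
  have "0 < pmf (outdist W P n) y" using joint_supp[of x y W P n] z zz by auto
  then show "z \<in> {(x, y). 0 < pmf (outdist W P n) y \<and> pmf (W n x) y < exp (real n * R) * pmf (outdist W P n) y} \<longleftrightarrow>
        z \<in> {(x, y). pmf (W n x) y < exp (real n * R) * pmf (outdist W P n) y}"
    using zz by auto
qed

lemma dens_nonneg: "0 \<le> dens_prob W P Q R n"
  by (simp add: dens_prob_def)

lemma dens_le1: "dens_prob W P Q R n \<le> 1"
  by (simp add: dens_prob_def)

lemma dens_mono: "R \<le> R' \<Longrightarrow> dens_prob W P Q R n \<le> dens_prob W P Q R' n"
  unfolding dens_prob_def by (intro measure_pmf.finite_measure_mono) auto

lemma dens_Q:
  assumes n: "n > 0" and g: "\<gamma> > 0"
  shows "dens_prob W P Q R n \<le> dens_prob W P (outdist W P) (R + \<gamma>) n + exp (- (real n * \<gamma>))"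
proof -
  have "dens_prob W P Q R n = measure_pmf.prob (joint W P n)
     {(x, y). 0 < pmf (Q n) y \<and> pmf (W n x) y < exp (real n * R) * pmf (Q n) y}"
    by (rule dens_conv[OF n])
  also have "\<dots> \<le> measure_pmf.prob (joint W P n)
     {(x, y). pmf (W n x) y < exp (real n * R) * exp (real n * \<gamma>) * pmf (outdist W P n) y} + 1 / exp (real n * \<gamma>)"
    unfolding joint_def outdist_def
    by (rule qlemma) auto
  also have "measure_pmf.prob (joint W P n)
     {(x, y). pmf (W n x) y < exp (real n * R) * exp (real n * \<gamma>) * pmf (outdist W P n) y}
     = dens_prob W P (outdist W P) (R + \<gamma>) n"
    by (simp add: dens_out[OF n] exp_add[symmetric] distrib_left)
  finally show ?thesis by (simp add: exp_minus field_simps)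
qed



lemma code_exists:
  assumes P: "set_pmf (P n) \<subseteq> Xck X c K n" and ne: "Xck X c K n \<noteq> {}" and g: "\<gamma> > 0"
  shows "\<exists>C. is_code X c K n C \<and> (n > 0 \<longrightarrow> r \<le> (1 / real n) * ln (real (code_size C))
     \<and> err_prob (W n) C \<le> dens_prob W P (outdist W P) (r + \<gamma>) n + 2 * exp (- (real n * \<gamma> / 2)))"
proof (cases "n > 0 \<and> r > 0")
  case False
  obtain x0 where x0: "x0 \<in> Xck X c K n" using ne by auto
  define C :: "('a, 'b) code" where "C = (1, \<lambda>_. x0, \<lambda>_. UNIV)"
  have "is_code X c K n C" using x0 by (auto simp: C_def is_code_def)
  moreover have "err_prob (W n) C = 0" by (simp add: C_def err_prob_def)
  moreover have "code_size C = 1" by (simp add: C_def code_size_def)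
  ultimately show ?thesis using False
    by (intro exI[of _ C]) (auto intro!: add_nonneg_nonneg dens_nonneg)
next
  case True
  then have n: "n > 0" and r: "r > 0" by auto
  define M where "M = nat \<lceil>exp (real n * r)\<rceil>"
  define \<beta> where "\<beta> = exp (real n * (r + \<gamma>/2))"
  have e1: "exp (real n * r) \<ge> 1" using n r by simp
  have "(1::int) \<le> \<lceil>exp (real n * r)\<rceil>" by simp
  then have M1: "M \<ge> 1" unfolding M_def by linarith
  have Mge: "real M \<ge> exp (real n * r)" by (simp add: M_def)
  have Mle: "real M \<le> 2 * exp (real n * r)"
  proof -
    have "real M = real_of_int \<lceil>exp (real n * r)\<rceil>" using e1 by (simp add: M_def)
    also have "\<dots> \<le> exp (real n * r) + 1" by linarith
    finally show ?thesis using e1 by linarith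
  qed
  have bpos: "\<beta> > 0" by (simp add: \<beta>_def)
  let ?j = "joint W P n" and ?q = "outdist W P n"
  let ?\<epsilon> = "measure_pmf.prob ?j {(x,y). pmf (W n x) y \<le> \<beta> * pmf ?q y} + M/\<beta>"
  obtain \<phi> E where ph: "\<forall>i\<in>{1..M}. \<phi> i \<in> set_pmf (P n)"
    and dj: "\<forall>i\<in>{1..M}. \<forall>k\<in>{1..M}. i\<noteq>k \<longrightarrow> E i \<inter> E k = {}"
    and pe: "\<forall>i\<in>{1..M}. measure_pmf.prob (W n (\<phi> i)) (E i) \<ge> 1 - ?\<epsilon>"
    using feinstein[OF bpos, where p="P n" and V="W n" and M=M] unfolding joint_def outdist_def by iprover
  define C :: "('a, 'b) code" where "C = (M, \<phi>, E)"
  have code: "is_code X c K n C" using M1 ph dj P by (auto simp: C_def is_code_def)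
  have err: "err_prob (W n) C \<le> ?\<epsilon>"
  proof -
    have "err_prob (W n) C = (1 / real M) * (\<Sum>i = 1..M. 1 - measure_pmf.prob (W n (\<phi> i)) (E i))"
      by (simp add: C_def err_prob_def)
    also have "\<dots> \<le> (1 / real M) * (\<Sum>i = 1..M. ?\<epsilon>)"
      using pe by (intro mult_left_mono sum_mono) (auto simp: algebra_simps)
    also have "\<dots> = ?\<epsilon>" using M1 by simp
    finally show ?thesis .
  qed
  have p1: "measure_pmf.prob ?j {(x,y). pmf (W n x) y \<le> \<beta> * pmf ?q y} \<le> dens_prob W P (outdist W P) (r + \<gamma>) n"
    unfolding dens_out[OF n]
  proof (rule prob_supp_mono)
    fix z assume z: "z \<in> set_pmf ?j" and zA: "z \<in> {(x,y). pmf (W n x) y \<le> \<beta> * pmf ?q y}"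
    obtain x y where zz: "z = (x,y)" by fastforce
    have q: "0 < pmf ?q y" using joint_supp[of x y W P n] z zz by auto
    have "\<beta> < exp (real n * (r + \<gamma>))" unfolding \<beta>_def using n g by simp
    then have "\<beta> * pmf ?q y < exp (real n * (r + \<gamma>)) * pmf ?q y" using q by simp
    then show "z \<in> {(x,y). pmf (W n x) y < exp (real n * (r + \<gamma>)) * pmf ?q y}"
      using zA zz by auto
  qed
  have p2: "M / \<beta> \<le> 2 * exp (- (real n * \<gamma> / 2))"
  proof -
    have "M / \<beta> \<le> 2 * exp (real n * r) / \<beta>" using Mle bpos by (simp add: divide_right_mono)
    also have "\<dots> = 2 * exp (- (real n * \<gamma> / 2))"
    proof -
      have "\<beta> = exp (real n * r) * exp (real n * \<gamma> / 2)"
        unfolding \<beta>_def by (simp add: exp_add[symmetric] distrib_left)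
      then have "2 * exp (real n * r) / \<beta> = 2 / exp (real n * \<gamma> / 2)"
        by simp
      moreover have "2 / exp (real n * \<gamma> / 2) = 2 * exp (- (real n * \<gamma> / 2))"
        by (simp add: exp_minus field_simps)
      ultimately show ?thesis by simp
    qed
    finally show ?thesis .
  qed
  have rate: "r \<le> (1 / real n) * ln (real (code_size C))"
  proof -
    have "ln (exp (real n * r)) \<le> ln (real M)" using Mge e1 M1
      by (subst ln_le_cancel_iff) auto
    then have "real n * r \<le> ln (real M)" by simp
    then show ?thesis using n by (simp add: C_def code_size_def field_simps)
  qed
  show ?thesis using code err p1 p2 rate by (intro exI[of _ C]) auto
qed



lemma limsup_vanish:
  fixes a b e :: "nat \<Rightarrow> real"
  assumes ev: "eventually (\<lambda>n. a n \<le> b n + e n) sequentially" and e: "e \<longlonglongrightarrow> 0"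
  shows "limsup (\<lambda>n. ereal (a n)) \<le> limsup (\<lambda>n. ereal (b n))"
  unfolding Limsup_le_iff
proof (intro allI impI)
  fix y :: ereal assume y: "limsup (\<lambda>n. ereal (b n)) < y"
  obtain z where z1: "limsup (\<lambda>n. ereal (b n)) < ereal z" and z2: "ereal z < y"
    using ereal_dense2[OF y] by auto
  have evb: "eventually (\<lambda>n. ereal (b n) < ereal z) sequentially" by (rule Limsup_lessD[OF z1])
  show "eventually (\<lambda>n. ereal (a n) < y) sequentially"
  proof (cases y)
    case (real y')
    then have "z < y'" using z2 by simp
    then have eve: "eventually (\<lambda>n. e n < y' - z) sequentially"
      using order_tendstoD(2)[OF e, of "y' - z"] by simp
    show ?thesis using ev evb eve
      by eventually_elim (use real in auto)
  next
    case PInf then show ?thesis by simp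
  next
    case MInf then show ?thesis using z2 by simp
  qed
qed

lemma exp_vanish: "c < 0 \<Longrightarrow> (\<lambda>n. exp (real n * c)) \<longlonglongrightarrow> 0"
  by (simp add: exp_of_nat_mult LIMSEQ_power_zero)

lemma diag:
  assumes "\<And>k. eventually (\<lambda>n. Pr k n) sequentially"
  shows "\<exists>\<kappa>::nat\<Rightarrow>nat. (\<forall>k. eventually (\<lambda>n. k \<le> \<kappa> n) sequentially) \<and> eventually (\<lambda>n. Pr (\<kappa> n) n) sequentially"
proof -
  have "\<forall>k. \<exists>N. \<forall>n\<ge>N. Pr k n" using assms by (simp add: eventually_sequentially)
  then obtain N where N: "\<And>k n. n \<ge> N k \<Longrightarrow> Pr k n" by metis
  define N' where "N' k = (\<Sum>i\<le>k. N i) + k" for k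
  have N'N: "N k \<le> N' k" for k unfolding N'_def by (simp add: member_le_sum trans_le_add1)
  have N'k: "k \<le> N' k" for k unfolding N'_def by simp
  have N'mono: "k \<le> k' \<Longrightarrow> N' k \<le> N' k'" for k k'
    unfolding N'_def by (intro add_mono sum_mono2) auto
  define S where "S n = {k. N' k \<le> n}" for n
  have finS: "finite (S n)" for n
    by (rule finite_subset[of _ "{..n}"]) (auto simp: S_def intro: order_trans[OF N'k])
  define \<kappa> where "\<kappa> n = Max (S n)" for n
  have 1: "\<forall>k. eventually (\<lambda>n. k \<le> \<kappa> n) sequentially"
  proof
    fix k show "eventually (\<lambda>n. k \<le> \<kappa> n) sequentially"
      unfolding eventually_sequentially
      by (rule exI[of _ "N' k"]) (auto simp: \<kappa>_def S_def intro!: Max_ge finS[unfolded S_def])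
  qed
  have 2: "eventually (\<lambda>n. Pr (\<kappa> n) n) sequentially"
    unfolding eventually_sequentially
  proof (intro exI allI impI)
    fix n assume n: "N' 0 \<le> n"
    then have "S n \<noteq> {}" by (auto simp: S_def)
    then have "\<kappa> n \<in> S n" unfolding \<kappa>_def using finS by (rule Max_in[rotated])
    then have "N (\<kappa> n) \<le> n" using N'N[of "\<kappa> n"] by (auto simp: S_def)
    then show "Pr (\<kappa> n) n" by (rule N)
  qed
  show ?thesis using 1 2 by blast
qed

lemma Lim_mono_left:
  fixes f :: "real \<Rightarrow> ereal"
  assumes mono: "\<And>a b. a \<le> b \<Longrightarrow> f a \<le> f b"
  shows "Lim (at_right (0::real)) (\<lambda>\<gamma>. f (R - \<gamma>)) = (SUP \<gamma>\<in>{0<..}. f (R - \<gamma>))"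
proof (rule tendsto_Lim)
  show "\<not> trivial_limit (at_right (0::real))" by simp
  show "((\<lambda>\<gamma>. f (R - \<gamma>)) \<longlongrightarrow> (SUP \<gamma>\<in>{0<..}. f (R - \<gamma>))) (at_right 0)"
  proof (rule order_tendstoI)
    fix a assume "a < (SUP \<gamma>\<in>{0<..}. f (R - \<gamma>))"
    then obtain g0 where g0: "g0 > 0" "a < f (R - g0)" by (auto simp: less_SUP_iff)
    show "eventually (\<lambda>\<gamma>. a < f (R - \<gamma>)) (at_right 0)"
      unfolding eventually_at_right_field
    proof (intro exI[of _ g0] conjI allI impI)
      fix y :: real assume "0 < y" "y < g0"
      then have "f (R - g0) \<le> f (R - y)" by (intro mono) simp
      then show "a < f (R - y)" using g0 by simp
    qed (use g0 in simp)
  next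
    fix a assume a: "(SUP \<gamma>\<in>{0<..}. f (R - \<gamma>)) < a"
    show "eventually (\<lambda>\<gamma>. f (R - \<gamma>) < a) (at_right 0)"
      unfolding eventually_at_right_field
    proof (intro exI[of _ "1::real"] conjI allI impI)
      fix y :: real assume "0 < y" "y < 1"
      then have "f (R - y) \<le> (SUP \<gamma>\<in>{0<..}. f (R - \<gamma>))" by (intro SUP_upper) simp
      then show "f (R - y) < a" using a by simp
    qed simp
  qed
qed

lemma Jp_mono: "R \<le> R' \<Longrightarrow> Jp R P Q W \<le> Jp R' P Q W"
  unfolding Jp_def by (intro Limsup_mono always_eventually allI) (simp add: dens_mono)

lemma Ip_mono: "R \<le> R' \<Longrightarrow> Ip R P W \<le> Ip R' P W"
  unfolding Ip_def by (intro Limsup_mono always_eventually allI) (simp add: dens_mono)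

lemma Ip_Jp: "Ip R P W = Jp R P (outdist W P) W"
  by (simp add: Ip_def Jp_def)

lemma Jp_le_Ip:
  assumes g: "\<gamma> > 0"
  shows "Jp R P Q W \<le> Ip (R + \<gamma>) P W"
  unfolding Jp_def Ip_def
proof (rule limsup_vanish)
  show "eventually (\<lambda>n. dens_prob W P Q R n \<le> dens_prob W P (outdist W P) (R + \<gamma>) n + exp (real n * (-\<gamma>))) sequentially"
    using eventually_gt_at_top[of "0::nat"] by eventually_elim (use dens_Q[OF _ g] in simp)
  show "(\<lambda>n. exp (real n * (-\<gamma>))) \<longlonglongrightarrow> 0" using g by (intro exp_vanish) simp
qed

lemma Ip_bounds: "0 \<le> Ip R P W" "Ip R P W \<le> 1"
  unfolding Ip_def
  by (auto intro!: Limsup_bounded le_Limsup always_eventually simp: dens_nonneg dens_le1)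



definition cdist :: "(nat \<Rightarrow> ('x, 'y) code) \<Rightarrow> nat \<Rightarrow> 'x pmf" where
  "cdist \<Phi> n = map_pmf (fst (snd (\<Phi> n))) (pmf_of_set {1..fst (\<Phi> n)})"

lemma cdist_Pck:
  assumes "\<Phi> \<in> code_seqs X c K" shows "cdist \<Phi> \<in> Pck X c K"
proof -
  have "set_pmf (cdist \<Phi> n) \<subseteq> Xck X c K n" for n
  proof -
    obtain N \<phi> D where eq: "\<Phi> n = (N, \<phi>, D)" by (metis prod_cases3)
    have "is_code X c K n (\<Phi> n)" using assms by (simp add: code_seqs_def)
    then have "1 \<le> N" "\<forall>i\<in>{1..N}. \<phi> i \<in> Xck X c K n" by (auto simp: eq is_code_def)
    then show ?thesis by (auto simp: cdist_def eq)
  qed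
  then show ?thesis by (simp add: Pck_def)
qed

lemma converse_seq:
  assumes \<Phi>: "\<Phi> \<in> code_seqs X c K" and rr: "r < r'"
    and ev: "eventually (\<lambda>n. r' < (1 / real n) * ln (real (code_size (\<Phi> n)))) sequentially"
  shows "Ip r (cdist \<Phi>) W \<le> err_limsup W \<Phi>"
  unfolding Ip_def err_limsup_def
proof (rule limsup_vanish)
  show "(\<lambda>n. exp (real n * (r - r'))) \<longlonglongrightarrow> 0" using rr by (intro exp_vanish) simp
  show "eventually (\<lambda>n. dens_prob W (cdist \<Phi>) (outdist W (cdist \<Phi>)) r n
      \<le> err_prob (W n) (\<Phi> n) + exp (real n * (r - r'))) sequentially"
    using ev eventually_gt_at_top[of "0::nat"]
  proof eventually_elim
    case (elim n)
    then have n: "n > 0" and rate: "r' < (1 / real n) * ln (real (code_size (\<Phi> n)))" by auto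
    obtain N \<phi> D where eq: "\<Phi> n = (N, \<phi>, D)" by (metis prod_cases3)
    have "is_code X c K n (\<Phi> n)" using \<Phi> by (simp add: code_seqs_def)
    then have N1: "1 \<le> N" and dj: "\<forall>i\<in>{1..N}. \<forall>k\<in>{1..N}. i\<noteq>k \<longrightarrow> D i \<inter> D k = {}"
      by (auto simp: eq is_code_def)
    have Npos: "real N > 0" using N1 by simp
    have "real n * r' < ln (real N)" using rate n by (simp add: eq code_size_def field_simps)
    then have Nbig: "exp (real n * r') < real N" using Npos by (metis exp_less_cancel_iff exp_ln)
    have "dens_prob W (cdist \<Phi>) (outdist W (cdist \<Phi>)) r n
        \<le> measure_pmf.prob (joint W (cdist \<Phi>) n) {(x,y). pmf (W n x) y \<le> exp (real n * r) * pmf (outdist W (cdist \<Phi>) n) y}"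
      unfolding dens_out[OF n] by (intro measure_pmf.finite_measure_mono) auto
    also have "\<dots> \<le> (1 / real N) * (\<Sum>i = 1..N. 1 - measure_pmf.prob (W n (\<phi> i)) (D i)) + exp (real n * r) / N"
      unfolding joint_def outdist_def cdist_def eq using converse1[OF N1 dj, where \<alpha>="exp (real n * r)" and V="W n"]
      by simp
    also have "(1 / real N) * (\<Sum>i = 1..N. 1 - measure_pmf.prob (W n (\<phi> i)) (D i)) = err_prob (W n) (\<Phi> n)"
      by (simp add: eq err_prob_def)
    also have "exp (real n * r) / N \<le> exp (real n * r) / exp (real n * r')"
      using Nbig Npos by (intro divide_left_mono) auto
    also have "\<dots> = exp (real n * (r - r'))"
      by (simp add: exp_diff[symmetric] right_diff_distrib)
    finally show ?case by simp
  qed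
qed

lemma small_k: "d > 0 \<Longrightarrow> \<exists>k::nat. 2 / (real k + 1) < d"
proof -
  assume d: "d > 0"
  obtain k :: nat where k: "2 / d < real k" using reals_Archimedean2 by blast
  then have "2 < d * real k" using d by (simp add: field_simps)
  then have "2 < d * (real k + 1)" using d by (simp add: distrib_left)
  then have "2 / (real k + 1) < d" by (simp add: divide_less_eq mult.commute)
  then show ?thesis by blast
qed

lemma ach_eps:
  assumes P: "P \<in> Pck X c K" and ne: "\<And>n. Xck X c K n \<noteq> {}" and g: "\<gamma> > 0"
  shows "\<exists>\<Phi>\<in>code_seqs X c K. ereal r \<le> rate_liminf \<Phi> \<and> err_limsup W \<Phi> \<le> Ip (r + \<gamma>) P W"
proof -
  have "\<forall>n. \<exists>C. is_code X c K n C \<and> (n > 0 \<longrightarrow> r \<le> (1 / real n) * ln (real (code_size C))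
     \<and> err_prob (W n) C \<le> dens_prob W P (outdist W P) (r + \<gamma>) n + 2 * exp (- (real n * \<gamma> / 2)))"
  proof
    fix n show "\<exists>C. is_code X c K n C \<and> (n > 0 \<longrightarrow> r \<le> (1 / real n) * ln (real (code_size C))
     \<and> err_prob (W n) C \<le> dens_prob W P (outdist W P) (r + \<gamma>) n + 2 * exp (- (real n * \<gamma> / 2)))"
      by (rule code_exists) (use P ne g in \<open>auto simp: Pck_def\<close>)
  qed
  then obtain \<Phi> where \<Phi>: "\<And>n. is_code X c K n (\<Phi> n)"
    and rt: "\<And>n. n > 0 \<Longrightarrow> r \<le> (1 / real n) * ln (real (code_size (\<Phi> n)))"
    and er: "\<And>n. n > 0 \<Longrightarrow> err_prob (W n) (\<Phi> n) \<le> dens_prob W P (outdist W P) (r + \<gamma>) n + 2 * exp (- (real n * \<gamma> / 2))"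
    by metis
  have "\<Phi> \<in> code_seqs X c K" using \<Phi> by (simp add: code_seqs_def)
  moreover have "ereal r \<le> rate_liminf \<Phi>"
    unfolding rate_liminf_def
    by (rule Liminf_bounded) (use eventually_gt_at_top[of "0::nat"] in \<open>eventually_elim, use rt in simp\<close>)
  moreover have "err_limsup W \<Phi> \<le> Ip (r + \<gamma>) P W"
    unfolding err_limsup_def Ip_def
  proof (rule limsup_vanish)
    show "eventually (\<lambda>n. err_prob (W n) (\<Phi> n) \<le> dens_prob W P (outdist W P) (r + \<gamma>) n + 2 * exp (real n * (-\<gamma>/2))) sequentially"
      using eventually_gt_at_top[of "0::nat"] by eventually_elim (use er in simp)
    show "(\<lambda>n. 2 * exp (real n * (-\<gamma>/2))) \<longlonglongrightarrow> 0"
      using exp_vanish[of "-\<gamma>/2"] g by (auto intro: tendsto_mult_right_zero)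
  qed
  ultimately show ?thesis by blast
qed



lemma ach_p:
  assumes P: "P \<in> Pck X c K" and ne: "\<And>n. Xck X c K n \<noteq> {}"
  shows "\<exists>\<Phi>\<in>code_seqs X c K. ereal R \<le> rate_liminf \<Phi> \<and> err_limsup W \<Phi> \<le> (SUP \<gamma>\<in>{0<..}. Ip (R - \<gamma>) P W)"
proof -
  define S where "S = (SUP \<gamma>\<in>{0<..}. Ip (R - \<gamma>) P W)"
  have S0: "0 \<le> S" unfolding S_def
    by (rule order_trans[OF Ip_bounds(1)[of "R - 1" P W]]) (rule SUP_upper, simp)
  have S1: "S \<le> 1" unfolding S_def by (rule SUP_least) (rule Ip_bounds(2))
  obtain s where Ss: "S = ereal s" using S0 S1 by (cases S) auto
  define gk where "gk k = 1 / (real k + 1)" for k :: nat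
  define rk where "rk k = R - 2 / (real k + 1)" for k :: nat
  have gk0: "gk k > 0" for k by (simp add: gk_def)
  have rkg: "rk k + gk k = R - gk k" for k by (simp add: rk_def gk_def field_simps)
  have "\<forall>k n. \<exists>C. is_code X c K n C \<and> (n > 0 \<longrightarrow> rk k \<le> (1 / real n) * ln (real (code_size C))
     \<and> err_prob (W n) C \<le> dens_prob W P (outdist W P) (rk k + gk k) n + 2 * exp (- (real n * gk k / 2)))"
  proof (intro allI)
    fix k n show "\<exists>C. is_code X c K n C \<and> (n > 0 \<longrightarrow> rk k \<le> (1 / real n) * ln (real (code_size C))
     \<and> err_prob (W n) C \<le> dens_prob W P (outdist W P) (rk k + gk k) n + 2 * exp (- (real n * gk k / 2)))"
      by (rule code_exists) (use P ne gk0 in \<open>auto simp: Pck_def\<close>)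
  qed
  then obtain C where C: "\<And>k n. is_code X c K n (C k n)"
    and rt: "\<And>k n. n > 0 \<Longrightarrow> rk k \<le> (1 / real n) * ln (real (code_size (C k n)))"
    and er: "\<And>k n. n > 0 \<Longrightarrow> err_prob (W n) (C k n) \<le> dens_prob W P (outdist W P) (R - gk k) n + 2 * exp (- (real n * gk k / 2))"
    unfolding rkg by metis
  have Pr: "eventually (\<lambda>n. n > 0 \<and> err_prob (W n) (C k n) \<le> s + 2 / (real k + 1)) sequentially" for k
  proof -
    have "Ip (R - gk k) P W \<le> S" unfolding S_def by (rule SUP_upper) (simp add: gk0)
    also have "\<dots> < ereal (s + gk k)" using Ss gk0[of k] by simp
    finally have "eventually (\<lambda>n. ereal (dens_prob W P (outdist W P) (R - gk k) n) < ereal (s + gk k)) sequentially"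
      unfolding Ip_def by (rule Limsup_lessD)
    moreover have "eventually (\<lambda>n. 2 * exp (real n * (- gk k / 2)) < gk k) sequentially"
    proof (rule order_tendstoD(2))
      show "(\<lambda>n. 2 * exp (real n * (- gk k / 2))) \<longlonglongrightarrow> 0"
        using exp_vanish[of "- gk k / 2"] gk0[of k] by (auto intro: tendsto_mult_right_zero)
    qed (rule gk0)
    moreover have "eventually (\<lambda>n. n > (0::nat)) sequentially" by (rule eventually_gt_at_top)
    ultimately show ?thesis
    proof eventually_elim
      case (elim n)
      then have "err_prob (W n) (C k n) \<le> s + gk k + gk k" using er[of n k] by simp
      also have "\<dots> = s + 2 / (real k + 1)" by (simp add: gk_def)
      finally show ?case using elim by simp
    qed
  qed
  obtain \<kappa> where \<kappa>1: "\<And>k. eventually (\<lambda>n. k \<le> \<kappa> n) sequentially"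
    and \<kappa>2: "eventually (\<lambda>n. n > 0 \<and> err_prob (W n) (C (\<kappa> n) n) \<le> s + 2 / (real (\<kappa> n) + 1)) sequentially"
    using diag[of "\<lambda>k n. n > 0 \<and> err_prob (W n) (C k n) \<le> s + 2 / (real k + 1)", OF Pr] by blast
  define \<Phi> where "\<Phi> n = C (\<kappa> n) n" for n
  have code: "\<Phi> \<in> code_seqs X c K" using C by (simp add: code_seqs_def \<Phi>_def)
  have mono2: "k \<le> k' \<Longrightarrow> 2 / (real k' + 1) \<le> 2 / (real k + 1)" for k k' :: nat
    by (intro divide_left_mono) auto
  have rate: "ereal R \<le> rate_liminf \<Phi>"
    unfolding rate_liminf_def le_Liminf_iff
  proof (intro allI impI)
    fix y assume y: "y < ereal R"
    show "eventually (\<lambda>n. y < ereal ((1 / real n) * ln (real (code_size (\<Phi> n))))) sequentially"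
    proof (cases y)
      case (real y')
      then have "0 < R - y'" using y by simp
      then obtain k where k: "2 / (real k + 1) < R - y'" using small_k by blast
      show ?thesis using \<kappa>1[of k] eventually_gt_at_top[of "0::nat"]
      proof eventually_elim
        case (elim n)
        then have "rk (\<kappa> n) \<le> (1 / real n) * ln (real (code_size (\<Phi> n)))"
          using rt[of n "\<kappa> n"] by (simp add: \<Phi>_def)
        moreover have "y' < rk (\<kappa> n)" using mono2[OF elim(1)] k by (simp add: rk_def)
        ultimately show ?case using real by simp
      qed
    qed (use y in auto)
  qed
  have err: "err_limsup W \<Phi> \<le> S"
    unfolding err_limsup_def Ss Limsup_le_iff
  proof (intro allI impI)
    fix y assume y: "ereal s < y"
    show "eventually (\<lambda>n. ereal (err_prob (W n) (\<Phi> n)) < y) sequentially"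
    proof (cases y)
      case (real y')
      then have "0 < y' - s" using y by simp
      then obtain k where k: "2 / (real k + 1) < y' - s" using small_k by blast
      show ?thesis using \<kappa>1[of k] \<kappa>2
      proof eventually_elim
        case (elim n)
        then have "err_prob (W n) (\<Phi> n) \<le> s + 2 / (real (\<kappa> n) + 1)" by (simp add: \<Phi>_def)
        also have "\<dots> < y'" using mono2[OF elim(1)] k by simp
        finally show ?case using real by simp
      qed
    qed (use y in auto)
  qed
  show ?thesis using code rate err unfolding S_def by blast
qed



lemma IpLim: "Lim (at_right (0::real)) (\<lambda>\<gamma>. Ip (R - \<gamma>) P W) = (SUP \<gamma>\<in>{0<..}. Ip (R - \<gamma>) P W)"
  by (rule Lim_mono_left[where f="\<lambda>x. Ip x P W"]) (rule Ip_mono)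

lemma JpLim: "Lim (at_right (0::real)) (\<lambda>\<gamma>. Jp (R - \<gamma>) P Q W) = (SUP \<gamma>\<in>{0<..}. Jp (R - \<gamma>) P Q W)"
  by (rule Lim_mono_left[where f="\<lambda>x. Jp x P Q W"]) (rule Jp_mono)

lemma part_p:
  fixes W :: "nat \<Rightarrow> 'x \<Rightarrow> 'y pmf"
  assumes ne: "\<And>n. Xck X c K n \<noteq> {}"
  shows "Cp R W X c K = (INF P\<in>Pck X c K. SUP \<gamma>\<in>{0<..}. Ip (R - \<gamma>) P W)"
proof (rule antisym)
  show "Cp R W X c K \<le> (INF P\<in>Pck X c K. SUP \<gamma>\<in>{0<..}. Ip (R - \<gamma>) P W)"
  proof (rule INF_greatest)
    fix P assume P: "P \<in> Pck X c K"
    obtain \<Phi> where \<Phi>: "\<Phi> \<in> code_seqs X c K" "ereal R \<le> rate_liminf \<Phi>"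
      "err_limsup W \<Phi> \<le> (SUP \<gamma>\<in>{0<..}. Ip (R - \<gamma>) P W)"
      using ach_p[OF P ne, of R W] by blast
    have "Cp R W X c K \<le> err_limsup W \<Phi>"
      unfolding Cp_def by (rule Inf_lower) (use \<Phi> in auto)
    then show "Cp R W X c K \<le> (SUP \<gamma>\<in>{0<..}. Ip (R - \<gamma>) P W)" using \<Phi>(3) by simp
  qed
next
  show "(INF P\<in>Pck X c K. SUP \<gamma>\<in>{0<..}. Ip (R - \<gamma>) P W) \<le> Cp R W X c K"
    unfolding Cp_def
  proof (rule Inf_greatest, clarify)
    fix \<Phi> :: "nat \<Rightarrow> ('x, 'y) code" assume \<Phi>: "\<Phi> \<in> code_seqs X c K" and rt: "ereal R \<le> rate_liminf \<Phi>"
    have "(INF P\<in>Pck X c K. SUP \<gamma>\<in>{0<..}. Ip (R - \<gamma>) P W) \<le> (SUP \<gamma>\<in>{0<..}. Ip (R - \<gamma>) (cdist \<Phi>) W)"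
      by (rule INF_lower) (rule cdist_Pck[OF \<Phi>])
    also have "\<dots> \<le> err_limsup W \<Phi>"
    proof (rule SUP_least)
      fix \<gamma> :: real assume "\<gamma> \<in> {0<..}"
      then have g: "\<gamma> > 0" by simp
      have "ereal (R - \<gamma>/2) < ereal R" using g by simp
      then have "ereal (R - \<gamma>/2) < rate_liminf \<Phi>" using rt by (rule order_less_le_trans)
      then have ev: "eventually (\<lambda>n. R - \<gamma>/2 < (1 / real n) * ln (real (code_size (\<Phi> n)))) sequentially"
        unfolding rate_liminf_def by (auto dest: less_LiminfD)
      show "Ip (R - \<gamma>) (cdist \<Phi>) W \<le> err_limsup W \<Phi>"
        by (rule converse_seq[OF \<Phi> _ ev]) (use g in simp)
    qed
    finally show "(INF P\<in>Pck X c K. SUP \<gamma>\<in>{0<..}. Ip (R - \<gamma>) P W) \<le> err_limsup W \<Phi>" .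
  qed
qed

lemma part_pQ:
  "(SUP Q. SUP \<gamma>\<in>{0<..}. Jp (R - \<gamma>) P Q W) = (SUP \<gamma>\<in>{0<..}. Ip (R - \<gamma>) P W)"
proof (rule antisym)
  show "(SUP Q. SUP \<gamma>\<in>{0<..}. Jp (R - \<gamma>) P Q W) \<le> (SUP \<gamma>\<in>{0<..}. Ip (R - \<gamma>) P W)"
  proof (intro SUP_least)
    fix Q and \<gamma> :: real assume "\<gamma> \<in> {0<..}"
    then have g: "\<gamma> > 0" by simp
    have "Jp (R - \<gamma>) P Q W \<le> Ip (R - \<gamma> + \<gamma>/2) P W" by (rule Jp_le_Ip) (use g in simp)
    also have "\<dots> = Ip (R - \<gamma>/2) P W" by simp
    also have "\<dots> \<le> (SUP \<gamma>\<in>{0<..}. Ip (R - \<gamma>) P W)" by (rule SUP_upper) (use g in simp)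
    finally show "Jp (R - \<gamma>) P Q W \<le> (SUP \<gamma>\<in>{0<..}. Ip (R - \<gamma>) P W)" .
  qed
  show "(SUP \<gamma>\<in>{0<..}. Ip (R - \<gamma>) P W) \<le> (SUP Q. SUP \<gamma>\<in>{0<..}. Jp (R - \<gamma>) P Q W)"
    by (rule SUP_upper2[where i="outdist W P"]) (auto simp: Ip_Jp)
qed

lemma part_eps:
  fixes W :: "nat \<Rightarrow> 'x \<Rightarrow> 'y pmf"
  assumes ne: "\<And>n. Xck X c K n \<noteq> {}"
  shows "Ceps eps W X c K = (SUP P\<in>Pck X c K. Ieps eps P W)"
proof (rule antisym)
  show "Ceps eps W X c K \<le> (SUP P\<in>Pck X c K. Ieps eps P W)"
    unfolding Ceps_def
  proof (rule Sup_least, clarify)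
    fix \<Phi> :: "nat \<Rightarrow> ('x, 'y) code" assume \<Phi>: "\<Phi> \<in> code_seqs X c K" and er: "err_limsup W \<Phi> \<le> ereal eps"
    have "rate_liminf \<Phi> \<le> Ieps eps (cdist \<Phi>) W"
    proof (rule ccontr)
      assume "\<not> ?thesis"
      then have "Ieps eps (cdist \<Phi>) W < rate_liminf \<Phi>" by simp
      then obtain z where z1: "Ieps eps (cdist \<Phi>) W < ereal z" and z2: "ereal z < rate_liminf \<Phi>"
        using ereal_dense2 by blast
      obtain z' where z'1: "ereal z < ereal z'" and z'2: "ereal z' < rate_liminf \<Phi>"
        using ereal_dense2[OF z2] by blast
      have ev: "eventually (\<lambda>n. z' < (1 / real n) * ln (real (code_size (\<Phi> n)))) sequentially"
        using z'2 unfolding rate_liminf_def by (auto dest: less_LiminfD)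
      have "Ip z (cdist \<Phi>) W \<le> err_limsup W \<Phi>"
        by (rule converse_seq[OF \<Phi> _ ev]) (use z'1 in simp)
      then have "Ip z (cdist \<Phi>) W \<le> ereal eps" using er by simp
      then have "ereal z \<le> Ieps eps (cdist \<Phi>) W" unfolding Ieps_def by (intro Sup_upper) auto
      then show False using z1 by simp
    qed
    also have "\<dots> \<le> (SUP P\<in>Pck X c K. Ieps eps P W)"
      by (rule SUP_upper) (rule cdist_Pck[OF \<Phi>])
    finally show "rate_liminf \<Phi> \<le> (SUP P\<in>Pck X c K. Ieps eps P W)" .
  qed
next
  show "(SUP P\<in>Pck X c K. Ieps eps P W) \<le> Ceps eps W X c K"
  proof (rule SUP_least)
    fix P assume P: "P \<in> Pck X c K"
    show "Ieps eps P W \<le> Ceps eps W X c K"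
      unfolding Ieps_def
    proof (rule Sup_least, clarify)
      fix R assume R: "Ip R P W \<le> ereal eps"
      show "ereal R \<le> Ceps eps W X c K"
      proof (rule ereal_le_epsilon2)
        fix e :: real assume e: "0 < e"
        obtain \<Phi> where \<Phi>: "\<Phi> \<in> code_seqs X c K" "ereal (R - e) \<le> rate_liminf \<Phi>"
          "err_limsup W \<Phi> \<le> Ip (R - e + e) P W"
          using ach_eps[OF P ne e, of "R - e" W] by blast
        have "rate_liminf \<Phi> \<le> Ceps eps W X c K"
          unfolding Ceps_def by (rule Sup_upper) (use \<Phi> R in auto)
        then have "ereal (R - e) \<le> Ceps eps W X c K" using \<Phi>(2) by simp
        then have "ereal (R - e) + ereal e \<le> Ceps eps W X c K + ereal e" by (rule add_right_mono)
        then show "ereal R \<le> Ceps eps W X c K + ereal e" by simp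
      qed
    qed
  qed
qed

lemma part_epsQ:
  "Ieps eps P W = (INF Q. Jeps eps P Q W)"
proof (rule antisym)
  show "Ieps eps P W \<le> (INF Q. Jeps eps P Q W)"
  proof (rule INF_greatest)
    fix Q
    show "Ieps eps P W \<le> Jeps eps P Q W"
      unfolding Ieps_def
    proof (rule Sup_least, clarify)
      fix R assume R: "Ip R P W \<le> ereal eps"
      show "ereal R \<le> Jeps eps P Q W"
      proof (rule ereal_le_epsilon2)
        fix e :: real assume e: "0 < e"
        have "Jp (R - e) P Q W \<le> Ip (R - e + e) P W" by (rule Jp_le_Ip[OF e])
        then have "Jp (R - e) P Q W \<le> ereal eps" using R by simp
        then have "ereal (R - e) \<le> Jeps eps P Q W" unfolding Jeps_def by (intro Sup_upper) auto
        then have "ereal (R - e) + ereal e \<le> Jeps eps P Q W + ereal e" by (rule add_right_mono)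
        then show "ereal R \<le> Jeps eps P Q W + ereal e" by simp
      qed
    qed
  qed
  show "(INF Q. Jeps eps P Q W) \<le> Ieps eps P W"
    by (rule INF_lower2[where i="outdist W P"]) (auto simp: Ieps_def Jeps_def Ip_Jp)
qed

theorem mainTheorem8:
  fixes W :: "nat \<Rightarrow> 'x \<Rightarrow> 'y pmf" and X :: "nat \<Rightarrow> 'x set"
    and c :: "nat \<Rightarrow> 'x \<Rightarrow> real" and K :: real
  assumes "\<And>n. countable (X n)"
    and "\<And>n. Xck X c K n \<noteq> {}"
  shows "(\<forall>R::real.
           Cp R W X c K =
             (INF P\<in>Pck X c K. Lim (at_right (0::real)) (\<lambda>\<gamma>. Ip (R - \<gamma>) P W))
         \<and> Cp R W X c K =
             (INF P\<in>Pck X c K. SUP Q::nat \<Rightarrow> 'y pmf.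
                 Lim (at_right (0::real)) (\<lambda>\<gamma>. Jp (R - \<gamma>) P Q W)))
    \<and> (\<forall>eps::real. 0 \<le> eps \<and> eps < 1 \<longrightarrow>
           Ceps eps W X c K = (SUP P\<in>Pck X c K. Ieps eps P W)
         \<and> Ceps eps W X c K = (SUP P\<in>Pck X c K. INF Q::nat \<Rightarrow> 'y pmf. Jeps eps P Q W))"
proof (intro conjI allI impI)
  fix R :: real
  show "Cp R W X c K = (INF P\<in>Pck X c K. Lim (at_right (0::real)) (\<lambda>\<gamma>. Ip (R - \<gamma>) P W))"
    unfolding IpLim by (rule part_p[OF assms(2)])
  show "Cp R W X c K = (INF P\<in>Pck X c K. SUP Q::nat \<Rightarrow> 'y pmf. Lim (at_right (0::real)) (\<lambda>\<gamma>. Jp (R - \<gamma>) P Q W))"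
    unfolding JpLim part_pQ by (rule part_p[OF assms(2)])
next
  fix eps :: real
  show "Ceps eps W X c K = (SUP P\<in>Pck X c K. Ieps eps P W)"
    by (rule part_eps[OF assms(2)])
  show "Ceps eps W X c K = (SUP P\<in>Pck X c K. INF Q::nat \<Rightarrow> 'y pmf. Jeps eps P Q W)"
    unfolding part_epsQ[symmetric] by (rule part_eps[OF assms(2)])
qed

end
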